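(* Let $n\ge 9$ and let $T^*$ be a chemical tree on $n$ vertices with maximum degree $\Delta(T^* )=4$. Let $\Phi(n)$ be the set of chemical trees $T$ on $n$ vertices having exactly one vertex of degree $4$, $n-5$ vertices of degree $2$, $4$ vertices of degree $1$ (and none of degree $3$), with $m_{1,2}(T)=m_{2,4}(T)=4$, $m_{1,4}(T)=0$ and $m_{2,2}(T)=n-9$. If $T^*\notin\Phi(n)$, then there exists $T\in\Phi(n)$ such that $SO(T)<SO(T^* )$ and $SO_{red}(T)<SO_{red}(T^* )$.
   Context: A chemical tree is a tree with maximum degree at most $4$. $d_G(u)$ is the degree of $u$ and $m_{i,j}(G)$ is the number of edges joining a vertex of degree $i$ to a vertex of degree $j$. $SO(G)=\sum_{uv\in E(G)}\sqrt{d_G(u)^2+d_G(v)^2}$ and $SO_{red}(G)=\sum_{uv\in E(G)}\sqrt{(d_G(u)-1)^2+(d_G(v)-1)^2}$. *)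

theory Defs
  imports Complex_Main
begin

definition simple_graph :: "'a set \<Rightarrow> 'a set set \<Rightarrow> bool" where
  "simple_graph V E \<longleftrightarrow> finite V \<and>
     (\<forall>e\<in>E. \<exists>u v. e = {u, v} \<and> u \<noteq> v \<and> u \<in> V \<and> v \<in> V)"

definition adj :: "'a set set \<Rightarrow> 'a \<Rightarrow> 'a \<Rightarrow> bool" where
  "adj E u v \<longleftrightarrow> {u, v} \<in> E"

definition connected_graph :: "'a set \<Rightarrow> 'a set set \<Rightarrow> bool" where
  "connected_graph V E \<longleftrightarrow> V \<noteq> {} \<and> (\<forall>u\<in>V. \<forall>v\<in>V. (adj E)\<^sup>*\<^sup>* u v)"

definition is_tree :: "'a set \<Rightarrow> 'a set set \<Rightarrow> bool" where
  "is_tree V E \<longleftrightarrow> simple_graph V E \<and> connected_graph V E \<and> card E = card V - 1"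

definition degree :: "'a set set \<Rightarrow> 'a \<Rightarrow> nat" where
  "degree E v = card {e\<in>E. v \<in> e}"

definition chemical_tree :: "'a set \<Rightarrow> 'a set set \<Rightarrow> bool" where
  "chemical_tree V E \<longleftrightarrow> is_tree V E \<and> (\<forall>v\<in>V. degree E v \<le> 4)"

definition max_degree :: "'a set \<Rightarrow> 'a set set \<Rightarrow> nat" where
  "max_degree V E = Max (degree E ` V)"

definition m_edges :: "'a set set \<Rightarrow> nat \<Rightarrow> nat \<Rightarrow> nat" where
  "m_edges E i j = card {e\<in>E. \<exists>u v. e = {u, v} \<and> u \<noteq> v \<and>
      ((degree E u = i \<and> degree E v = j) \<or> (degree E u = j \<and> degree E v = i))}"

text \<open>Sombor index and reduced Sombor index; for an edge e = {u,v},
  the sum over w in e of d(w)^2 is d(u)^2 + d(v)^2.\<close>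
definition SO :: "'a set set \<Rightarrow> real" where
  "SO E = (\<Sum>e\<in>E. sqrt (\<Sum>w\<in>e. (real (degree E w))\<^sup>2))"

definition SO_red :: "'a set set \<Rightarrow> real" where
  "SO_red E = (\<Sum>e\<in>E. sqrt (\<Sum>w\<in>e. (real (degree E w) - 1)\<^sup>2))"

definition num_deg :: "'a set \<Rightarrow> 'a set set \<Rightarrow> nat \<Rightarrow> nat" where
  "num_deg V E k = card {v\<in>V. degree E v = k}"

definition Phi :: "nat \<Rightarrow> 'a set \<Rightarrow> 'a set set \<Rightarrow> bool" where
  "Phi n V E \<longleftrightarrow> chemical_tree V E \<and> card V = n \<and>
     num_deg V E 4 = 1 \<and> num_deg V E 2 = n - 5 \<and> num_deg V E 1 = 4 \<and> num_deg V E 3 = 0 \<and>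
     m_edges E 1 2 = 4 \<and> m_edges E 2 4 = 4 \<and> m_edges E 1 4 = 0 \<and> m_edges E 2 2 = n - 9"

end

theory Submission imports Defs begin

definition B3 :: "'a set \<Rightarrow> 'a set set \<Rightarrow> bool" where
  "B3 V E \<longleftrightarrow> (\<exists>c\<in>V. degree E c = 4 \<and> (\<forall>v\<in>V. degree E v = 4 \<longrightarrow> v = c) \<and>
     (\<forall>v\<in>V. degree E v \<noteq> 3) \<and> (\<forall>w. {c, w} \<in> E \<longrightarrow> degree E w \<noteq> 1))"

definition idx :: "(nat \<Rightarrow> real) \<Rightarrow> 'a set set \<Rightarrow> real" where
  "idx \<rho> E = (\<Sum>e\<in>E. sqrt (\<Sum>w\<in>e. \<rho> (degree E w)))"

definition LBv :: "(nat \<Rightarrow> real) \<Rightarrow> nat \<Rightarrow> real" where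
  "LBv h n = (2*h 1 - 2*h 2) * real n + (2*h 2 - h 1) * (2 * real n - 2)
     + (4 * h 4 - (2*h 1 - 2*h 2) - 4 * (2*h 2 - h 1))"

locale ctree =
  fixes V :: "'a set" and E :: "'a set set"
  assumes chem: "chemical_tree V E" and three: "card V \<ge> 3"
begin

lemma finV: "finite V"
  using chem three unfolding chemical_tree_def is_tree_def simple_graph_def by auto

lemma edge: "e \<in> E \<Longrightarrow> \<exists>a b. e = {a, b} \<and> a \<noteq> b \<and> a \<in> V \<and> b \<in> V"
  using chem unfolding chemical_tree_def is_tree_def simple_graph_def by auto

lemma edge_sub: "e \<in> E \<Longrightarrow> e \<subseteq> V"
  using edge by blast

lemma finE: "finite E"
proof -
  have "E \<subseteq> Pow V" using edge_sub by blast
  then show ?thesis using finV finite_subset by blast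
qed

lemma finedge: "e \<in> E \<Longrightarrow> finite e"
  using edge by blast

lemma cardE: "card E = card V - 1"
  using chem unfolding chemical_tree_def is_tree_def by auto

lemma deg_le4: "v \<in> V \<Longrightarrow> degree E v \<le> 4"
  using chem unfolding chemical_tree_def by auto

lemma conn: "u \<in> V \<Longrightarrow> v \<in> V \<Longrightarrow> (adj E)\<^sup>*\<^sup>* u v"
  using chem unfolding chemical_tree_def is_tree_def connected_graph_def by auto

lemma deg_ge1: assumes "v \<in> V" shows "degree E v \<ge> 1"
proof -
  have "V \<noteq> {v}" using three by auto
  then obtain u where u: "u \<in> V" "u \<noteq> v" using assms by blast
  have "(adj E)\<^sup>*\<^sup>* v u" using conn assms u by auto
  then obtain w where "adj E v w"
    using u(2) by (metis converse_rtranclpE)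
  then have "{v, w} \<in> {e\<in>E. v \<in> e}" unfolding adj_def by auto
  moreover have "finite {e\<in>E. v \<in> e}" using finE by auto
  ultimately have "card {e\<in>E. v \<in> e} \<noteq> 0" by (metis card_0_eq empty_iff)
  then show ?thesis unfolding degree_def by auto
qed

lemma leaf_unique:
  assumes "degree E a = 1" "{a, b} \<in> E" "{a, y} \<in> E" "a \<noteq> b"
  shows "y = b"
proof -
  have "card {e\<in>E. a \<in> e} = 1" using assms unfolding degree_def by auto
  then obtain f where f: "{e\<in>E. a \<in> e} = {f}" by (rule card_1_singletonE)
  have "{a,b} \<in> {e\<in>E. a \<in> e}" "{a,y} \<in> {e\<in>E. a \<in> e}" using assms(2,3) by auto
  then have "{a,b} = f" "{a,y} = f" unfolding f by auto
  then have "{a,y} = {a,b}" by simp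
  then show ?thesis using assms(4) by (auto simp: doubleton_eq_iff)
qed

lemma no11:
  assumes "{a, b} \<in> E" "a \<noteq> b" "degree E a = 1" "degree E b = 1"
  shows False
proof -
  have b2: "{b, a} \<in> E" using assms(1) by (simp add: insert_commute)
  have "x \<in> {a, b}" if "(adj E)\<^sup>*\<^sup>* a x" for x
    using that
  proof (induction rule: rtranclp_induct)
    case base then show ?case by simp
  next
    case (step y z)
    then have yz: "{y, z} \<in> E" unfolding adj_def by simp
    show ?case
    proof (cases "y = a")
      case True
      then show ?thesis using leaf_unique[OF assms(3) assms(1)] yz assms(2) by auto
    next
      case False
      then have "y = b" using step by auto
      then show ?thesis using leaf_unique[OF assms(4) b2] yz assms(2) by auto
    qed
  qed
  moreover have aV: "a \<in> V" using edge_sub assms(1) by auto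
  ultimately have "V \<subseteq> {a, b}" using conn by blast
  then have "card V \<le> card {a, b}" by (simp add: card_mono)
  also have "\<dots> \<le> 2" by (simp add: card_insert_le_m1)
  finally show False using three by simp
qed

lemma swap:
  "(\<Sum>e\<in>E. \<Sum>v\<in>e. G v e) = (\<Sum>v\<in>V. \<Sum>e\<in>{e\<in>E. v \<in> e}. (G v e :: 'b::comm_monoid_add))"
proof -
  have "(\<Sum>v\<in>V. \<Sum>e\<in>{e. e \<in> E \<and> v \<in> e}. G v e) = (\<Sum>e\<in>E. \<Sum>v\<in>{v. v \<in> V \<and> v \<in> e}. G v e)"
    by (rule sum.swap_restrict[OF finV finE])
  also have "\<dots> = (\<Sum>e\<in>E. \<Sum>v\<in>e. G v e)"
  proof (rule sum.cong)
    fix e assume "e \<in> E"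
    then have "{v. v \<in> V \<and> v \<in> e} = e" using edge_sub by auto
    then show "(\<Sum>v\<in>{v. v \<in> V \<and> v \<in> e}. G v e) = (\<Sum>v\<in>e. G v e)" by simp
  qed simp
  finally show ?thesis by simp
qed

lemma handshake: "(\<Sum>v\<in>V. degree E v) = 2 * (card V - 1)"
proof -
  have "(\<Sum>v\<in>V. degree E v) = (\<Sum>v\<in>V. \<Sum>e\<in>{e\<in>E. v \<in> e}. (1::nat))"
    unfolding degree_def by simp
  also have "\<dots> = (\<Sum>e\<in>E. \<Sum>v\<in>e. (1::nat))" by (rule swap[symmetric])
  also have "\<dots> = (\<Sum>e\<in>E. 2)"
  proof (rule sum.cong)
    fix e assume "e \<in> E"
    then obtain a b where "e = {a,b}" "a \<noteq> b" using edge by blast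
    then show "(\<Sum>v\<in>e. (1::nat)) = 2" by simp
  qed simp
  also have "\<dots> = 2 * card E" by simp
  finally show ?thesis using cardE by simp
qed

lemma edgeD:
  assumes "e \<in> E"
  shows "\<exists>a b. e = {a, b} \<and> a \<noteq> b \<and> a \<in> V \<and> b \<in> V \<and> degree E a \<in> {1..4} \<and> degree E b \<in> {1..4}
     \<and> \<not> (degree E a = 1 \<and> degree E b = 1)"
proof -
  obtain a b where ab: "e = {a, b}" "a \<noteq> b" "a \<in> V" "b \<in> V" using edge assms by blast
  have "\<not> (degree E a = 1 \<and> degree E b = 1)" using no11 ab assms by blast
  then show ?thesis using ab deg_ge1 deg_le4 by auto
qed

lemma nV: "real (card V - 1) = real (card V) - 1"
  using three by simp

lemma index_bound:
  fixes \<rho> h :: "nat \<Rightarrow> real" and K :: real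
  assumes has4: "\<exists>c\<in>V. degree E c = 4"
  and N1: "3*h 3 > (2*h 1 - 2*h 2) + 3*(2*h 2 - h 1)"
  and N2: "8*K - (2*h 1 - 2*h 2) - 4*(2*h 2 - h 1) > 4*h 4"
  and N3: "4*K > (2*h 1 - 2*h 2) + 4*(2*h 2 - h 1)"
  and N4: "K \<le> h 4"
  and EI: "\<And>i j. i \<in> {1..4} \<Longrightarrow> j \<in> {1..4} \<Longrightarrow> \<not>(i=1 \<and> j=1) \<Longrightarrow> \<not>(i=4 \<and> j=4) \<Longrightarrow> sqrt(\<rho> i + \<rho> j) \<ge> h i + h j"
  and E44: "sqrt(\<rho> 4 + \<rho> 4) = 2*K"
  and E12: "sqrt(\<rho> 1 + \<rho> 2) = h 1 + h 2" and E22: "sqrt(\<rho> 2 + \<rho> 2) = 2*h 2"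
  and E24: "sqrt(\<rho> 2 + \<rho> 4) = h 2 + h 4"
  and S14: "sqrt(\<rho> 1 + \<rho> 4) > h 1 + h 4"
  shows "(B3 V E \<longrightarrow> idx \<rho> E = LBv h (card V)) \<and> (\<not> B3 V E \<longrightarrow> idx \<rho> E > LBv h (card V))"
proof -
  define \<alpha> where "\<alpha> = 2*h 1 - 2*h 2"
  define \<beta> where "\<beta> = 2*h 2 - h 1"
  define C4 where "C4 = 4 * h 4 - \<alpha> - 4 * \<beta>"
  define d where "d = degree E"
  define g where "g v e = (if (\<forall>w\<in>e. d w = 4) then K else h (d v))" for v e
  define D where "D e = sqrt(\<Sum>w\<in>e. \<rho> (d w)) - (\<Sum>v\<in>e. g v e)" for e
  define \<psi> where "\<psi> v = (\<Sum>e\<in>{e\<in>E. v \<in> e}. g v e)" for v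
  define ex where "ex v = \<psi> v - \<alpha> - \<beta> * real (d v)" for v
  define n where "n = card V"
  have LB: "LBv h n = \<alpha> * real n + \<beta> * (2 * real n - 2) + C4"
    unfolding LBv_def \<alpha>_def \<beta>_def C4_def by simp
  have Dab: "D {a,b} = sqrt(\<rho> (d a) + \<rho> (d b)) - (if d a = 4 \<and> d b = 4 then 2*K else h (d a) + h (d b))"
    if "a \<noteq> b" for a b
    using that unfolding D_def g_def by auto
  have Dnn: "D e \<ge> 0" if eE: "e \<in> E" for e
  proof -
    obtain a b where ab: "e = {a, b}" "a \<noteq> b" "d a \<in> {1..4}" "d b \<in> {1..4}" "\<not> (d a = 1 \<and> d b = 1)"
      using edgeD[OF eE] unfolding d_def by blast
    show ?thesis
    proof (cases "d a = 4 \<and> d b = 4")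
      case True then show ?thesis using Dab[OF ab(2)] ab(1) E44 by simp
    next
      case False then show ?thesis using Dab[OF ab(2)] ab EI[of "d a" "d b"] by auto
    qed
  qed
  have split: "idx \<rho> E = (\<Sum>e\<in>E. \<Sum>v\<in>e. g v e) + (\<Sum>e\<in>E. D e)"
    unfolding idx_def D_def d_def by (simp add: sum.distrib[symmetric])
  have sw: "(\<Sum>e\<in>E. \<Sum>v\<in>e. g v e) = (\<Sum>v\<in>V. \<psi> v)"
    unfolding \<psi>_def by (rule swap)
  have hs: "(\<Sum>v\<in>V. real (d v)) = 2 * real n - 2"
  proof -
    have "(\<Sum>v\<in>V. real (d v)) = real (\<Sum>v\<in>V. d v)" by simp
    also have "\<dots> = real (2 * (card V - 1))" unfolding d_def using handshake by simp
    finally show ?thesis using nV unfolding n_def by simp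
  qed
  have psum: "(\<Sum>v\<in>V. \<psi> v) = \<alpha> * real n + \<beta> * (2 * real n - 2) + (\<Sum>v\<in>V. ex v)"
  proof -
    have "(\<Sum>v\<in>V. ex v) = (\<Sum>v\<in>V. \<psi> v) - (\<Sum>v\<in>V. \<alpha>) - (\<Sum>v\<in>V. \<beta> * real (d v))"
      unfolding ex_def by (simp add: sum_subtractf)
    also have "\<dots> = (\<Sum>v\<in>V. \<psi> v) - \<alpha> * real n - \<beta> * (2 * real n - 2)"
      by (simp add: sum_distrib_left[symmetric] hs n_def)
    finally show ?thesis by simp
  qed
  have cardinc: "card {e\<in>E. v \<in> e} = d v" for v unfolding d_def degree_def by simp
  have psi_not4: "\<psi> v = real (d v) * h (d v)" if "v \<in> V" "d v \<noteq> 4" for v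
  proof -
    have "\<psi> v = (\<Sum>e\<in>{e\<in>E. v \<in> e}. h (d v))"
      unfolding \<psi>_def by (rule sum.cong) (use that in \<open>auto simp: g_def\<close>)
    then show ?thesis using cardinc by simp
  qed
  have psi_4: "\<psi> v \<ge> 4 * K" if "v \<in> V" "d v = 4" for v
  proof -
    have "real (card {e\<in>E. v \<in> e}) * K \<le> \<psi> v"
      unfolding \<psi>_def by (rule sum_bounded_below) (use N4 that in \<open>auto simp: g_def\<close>)
    then show ?thesis using cardinc that by simp
  qed
  have psi_4u: "\<psi> v = 4 * h 4" if "v \<in> V" "d v = 4" "\<forall>u\<in>V. d u = 4 \<longrightarrow> u = v" for v
  proof -
    have "\<psi> v = (\<Sum>e\<in>{e\<in>E. v \<in> e}. h 4)"
      unfolding \<psi>_def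
    proof (rule sum.cong)
      fix e assume e: "e \<in> {e\<in>E. v \<in> e}"
      then obtain a b where ab: "e = {a, b}" "a \<noteq> b" "a \<in> V" "b \<in> V" using edge by blast
      obtain w where w: "w \<in> e" "w \<noteq> v" using ab by blast
      have "w \<in> V" using w(1) ab by blast
      then have "d w \<noteq> 4" using w(2) that(3) by blast
      then have "\<not> (\<forall>w\<in>e. d w = 4)" using w(1) by blast
      then show "g v e = h 4" unfolding g_def using that(2) by auto
    qed simp
    then show ?thesis using cardinc that(2) by simp
  qed
  have ex1: "ex v = 0" if "v \<in> V" "d v = 1" for v
    using psi_not4[OF that(1)] that unfolding ex_def \<alpha>_def \<beta>_def by simp
  have ex2: "ex v = 0" if "v \<in> V" "d v = 2" for v
    using psi_not4[OF that(1)] that unfolding ex_def \<alpha>_def \<beta>_def by simp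
  have ex3: "ex v > 0" if "v \<in> V" "d v = 3" for v
    using psi_not4[OF that(1)] that N1 unfolding ex_def \<alpha>_def \<beta>_def by simp
  have ex4: "ex v \<ge> 4*K - \<alpha> - 4*\<beta>" if "v \<in> V" "d v = 4" for v
    using psi_4[OF that] that unfolding ex_def by simp
  have ex4u: "ex v = C4" if "v \<in> V" "d v = 4" "\<forall>u\<in>V. d u = 4 \<longrightarrow> u = v" for v
    using psi_4u[OF that] that(2) unfolding ex_def C4_def by simp
  have dV: "d v \<in> {1..4}" if "v \<in> V" for v using deg_ge1 deg_le4 that unfolding d_def by auto
  have exnn: "ex v \<ge> 0" if "v \<in> V" for v
  proof -
    have "d v = 1 \<or> d v = 2 \<or> d v = 3 \<or> d v = 4" using dV[OF that] by auto
    then show ?thesis using ex1 ex2 ex3 ex4 N3 that unfolding \<alpha>_def \<beta>_def by force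
  qed
  have main: "idx \<rho> E - LBv h n = (\<Sum>e\<in>E. D e) + (\<Sum>v\<in>V. ex v) - C4"
    using split sw psum LB by simp
  have Dsum: "(\<Sum>e\<in>E. D e) \<ge> 0" using Dnn by (simp add: sum_nonneg)
  have ex_two: "(\<Sum>v\<in>V. ex v) \<ge> ex a + ex b" if "a \<in> V" "b \<in> V" "a \<noteq> b" for a b
  proof -
    have "(\<Sum>v\<in>{a,b}. ex v) \<le> (\<Sum>v\<in>V. ex v)"
      by (rule sum_mono2) (use finV that exnn in auto)
    then show ?thesis using that by simp
  qed
  have ex_one: "(\<Sum>v\<in>V. ex v) \<ge> ex a" if "a \<in> V" for a
    by (rule member_le_sum) (use finV that exnn in auto)
  obtain c where c: "c \<in> V" "d c = 4" using has4 unfolding d_def by blast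
  show ?thesis
  proof (cases "\<forall>u\<in>V. d u = 4 \<longrightarrow> u = c")
    case False
    then obtain u where u: "u \<in> V" "d u = 4" "u \<noteq> c" by blast
    have "(\<Sum>v\<in>V. ex v) \<ge> ex c + ex u" using ex_two c u by auto
    moreover have "ex c + ex u > C4" using ex4[OF c] ex4[OF u(1,2)] N2
      unfolding C4_def \<alpha>_def \<beta>_def by simp
    ultimately have "idx \<rho> E > LBv h n" using main Dsum by simp
    moreover have "\<not> B3 V E"
    proof
      assume "B3 V E"
      then obtain c' where "c' \<in> V" "\<forall>v\<in>V. degree E v = 4 \<longrightarrow> v = c'" unfolding B3_def by blast
      then have "u = c'" "c = c'" using u(1,2) c unfolding d_def by blast+
      then show False using u(3) by simp
    qed
    ultimately show ?thesis unfolding n_def by simp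
  next
    case True
    note uniq = True
    have exc: "ex c = C4" using ex4u[OF c True] .
    show ?thesis
    proof (cases "B3 V E")
      case True
      then obtain c' where c': "c' \<in> V" "d c' = 4" "\<forall>v\<in>V. d v \<noteq> 3" "\<forall>w. {c', w} \<in> E \<longrightarrow> d w \<noteq> 1"
        unfolding B3_def d_def by blast
      have cc: "c' = c" using uniq c' by blast
      have exs: "(\<Sum>v\<in>V. ex v) = C4"
      proof -
        have "(\<Sum>v\<in>V. ex v) = ex c + (\<Sum>v\<in>V - {c}. ex v)"
          using finV c(1) by (simp add: sum.remove)
        also have "(\<Sum>v\<in>V - {c}. ex v) = 0"
        proof (rule sum.neutral, rule ballI)
          fix v assume v: "v \<in> V - {c}"
          then have "d v \<noteq> 4" "d v \<noteq> 3" using uniq c'(3) by blast+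
          moreover have "d v \<in> {1..4}" using dV v by auto
          ultimately have "d v = 1 \<or> d v = 2" by auto
          then show "ex v = 0" using ex1 ex2 v by auto
        qed
        finally show ?thesis using exc by simp
      qed
      have D0: "D e = 0" if eE: "e \<in> E" for e
      proof -
        obtain a b where ab: "e = {a, b}" "a \<noteq> b" "a \<in> V" "b \<in> V" "d a \<in> {1..4}" "d b \<in> {1..4}" "\<not> (d a = 1 \<and> d b = 1)"
          using edgeD[OF eE] unfolding d_def by blast
        have n3: "d a \<noteq> 3" "d b \<noteq> 3" using c'(3) ab(3,4) by blast+
        show ?thesis
        proof (cases "d a = 4")
          case True
          then have ac: "a = c" using uniq ab(3) by blast
          then have cbE: "{c, b} \<in> E" using ab(1) eE by simp
          have "d b \<noteq> 1" using c'(4) cc cbE by blast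
          moreover have "d b \<noteq> 4" using uniq ab(4) ab(2) ac by blast
          ultimately have "d b \<noteq> 1" "d b \<noteq> 4" by auto
          then have "d b = 2" using ab n3 by auto
          then show ?thesis using Dab[OF ab(2)] ab(1) True E24 by (simp add: add.commute)
        next
          case False
          note fa = False
          show ?thesis
          proof (cases "d b = 4")
            case True
            then have "b = c" using uniq ab(4) by blast
            then have "{c, a} \<in> E" using ab eE by (simp add: insert_commute)
            then have "d a \<noteq> 1" using c'(4) cc by blast
            then have "d a = 2" using ab n3 fa by auto
            then show ?thesis using Dab[OF ab(2)] True E24 ab(1) by simp
          next
            case False
            then have "(d a = 1 \<and> d b = 2) \<or> (d a = 2 \<and> d b = 1) \<or> (d a = 2 \<and> d b = 2)"
              using ab n3 fa by auto
            then show ?thesis using Dab[OF ab(2)] ab(1) E12 E22 by (auto simp: add.commute)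
          qed
        qed
      qed
      have "(\<Sum>e\<in>E. D e) = 0" using D0 by simp
      then show ?thesis using main exs True unfolding n_def by simp
    next
      case False
      have alt: "(\<exists>v\<in>V. d v = 3) \<or> (\<exists>w. {c, w} \<in> E \<and> d w = 1)"
      proof (rule ccontr)
        assume na: "\<not> ?thesis"
        have "B3 V E" unfolding B3_def
        proof (rule bexI[OF _ c(1)])
          have "\<forall>v\<in>V. degree E v \<noteq> 3" using na unfolding d_def by blast
          moreover have "\<forall>w. {c, w} \<in> E \<longrightarrow> degree E w \<noteq> 1" using na unfolding d_def by blast
          moreover have "\<forall>v\<in>V. degree E v = 4 \<longrightarrow> v = c" using uniq unfolding d_def by blast
          ultimately show "degree E c = 4 \<and> (\<forall>v\<in>V. degree E v = 4 \<longrightarrow> v = c) \<and> (\<forall>v\<in>V. degree E v \<noteq> 3) \<and> (\<forall>w. {c, w} \<in> E \<longrightarrow> degree E w \<noteq> 1)"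
            using c(2) unfolding d_def by blast
        qed
        then show False using False by simp
      qed
      have "idx \<rho> E > LBv h n"
      proof (cases "\<exists>v\<in>V. d v = 3")
        case True
        then obtain v where v: "v \<in> V" "d v = 3" by blast
        then have "v \<noteq> c" using c by auto
        then have "(\<Sum>v\<in>V. ex v) \<ge> ex c + ex v" using ex_two c v by auto
        then show ?thesis using main Dsum exc ex3[OF v] by simp
      next
        case False
        then obtain w where w: "{c, w} \<in> E" "d w = 1" using alt by blast
        then have cw: "c \<noteq> w" using c by auto
        have "D {c, w} > 0" using Dab[OF cw] c w S14 by (simp add: add.commute)
        moreover have "(\<Sum>e\<in>E. D e) \<ge> D {c, w}"
          by (rule member_le_sum) (use finE w Dnn in auto)
        ultimately show ?thesis using main ex_one[OF c(1)] exc by simp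
      qed
      then show ?thesis using False unfolding n_def by simp
    qed
  qed
qed

end
lemma pair_pred:
  assumes "a \<noteq> b"
  shows "(\<exists>u v. {a, b} = {u, v} \<and> u \<noteq> v \<and> Q u v) \<longleftrightarrow> (Q a b \<or> Q b a)"
  using assms by (auto simp: doubleton_eq_iff)

lemma cnt_nat: "finite A \<Longrightarrow> (\<Sum>v\<in>A. if P v then (1::nat) else 0) = card {v\<in>A. P v}"
  by (simp add: sum.inter_filter[symmetric])

context ctree
begin

lemma B3_Phi:
  assumes "B3 V E"
  shows "Phi (card V) V E"
proof -
  define d where "d = degree E"
  obtain c where c: "c \<in> V" "d c = 4" "\<forall>v\<in>V. d v = 4 \<longrightarrow> v = c" "\<forall>v\<in>V. d v \<noteq> 3"
      "\<forall>w. {c, w} \<in> E \<longrightarrow> d w \<noteq> 1"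
    using assms unfolding B3_def d_def by blast
  define n where "n = card V"
  have dV: "d v = 1 \<or> d v = 2 \<or> d v = 4" if "v \<in> V" for v
  proof -
    have "d v \<in> {1..4}" using deg_ge1 deg_le4 that unfolding d_def by auto
    then show ?thesis using c(4) that by auto
  qed
  define I where "I k v = (if d v = k then (1::nat) else 0)" for k v
  have cntI: "(\<Sum>v\<in>V. I k v) = card {v\<in>V. d v = k}" for k
    unfolding I_def using cnt_nat[OF finV] by simp
  define n1 where "n1 = card {v\<in>V. d v = 1}"
  define n2 where "n2 = card {v\<in>V. d v = 2}"
  have V4: "{v\<in>V. d v = 4} = {c}" using c(1,2,3) by blast
  have V3: "{v\<in>V. d v = 3} = {}" using c(4) by blast
  have nsum: "n = n1 + n2 + 1"
  proof -
    have "n = (\<Sum>v\<in>V. (1::nat))" unfolding n_def by simp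
    also have "\<dots> = (\<Sum>v\<in>V. I 1 v + I 2 v + I 4 v)"
      by (rule sum.cong) (use dV in \<open>auto simp: I_def\<close>)
    also have "\<dots> = n1 + n2 + 1"
      by (simp add: sum.distrib cntI n1_def n2_def V4)
    finally show ?thesis .
  qed
  have dsum: "n1 + 2 * n2 + 4 = 2 * (n - 1)"
  proof -
    have "(\<Sum>v\<in>V. d v) = (\<Sum>v\<in>V. I 1 v + 2 * I 2 v + 4 * I 4 v)"
      by (rule sum.cong) (use dV in \<open>auto simp: I_def\<close>)
    also have "\<dots> = n1 + 2 * n2 + 4"
      by (simp add: sum.distrib cntI n1_def n2_def V4 sum_distrib_left[symmetric])
    finally show ?thesis using handshake unfolding d_def n_def by simp
  qed
  have n1v: "n1 = 4" and n2v: "n2 = n - 5" using nsum dsum by auto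
  have edge_cls: "\<exists>a b. e = {a, b} \<and> a \<noteq> b \<and>
      ((d a = 1 \<and> d b = 2) \<or> (d a = 2 \<and> d b = 1) \<or> (d a = 2 \<and> d b = 2) \<or> (d a = 2 \<and> d b = 4) \<or> (d a = 4 \<and> d b = 2))"
    if eE: "e \<in> E" for e
  proof -
    obtain a b where ab: "e = {a, b}" "a \<noteq> b" "a \<in> V" "b \<in> V" "\<not> (d a = 1 \<and> d b = 1)"
      using edgeD[OF eE] unfolding d_def by blast
    have "\<not> (d a = 4 \<and> d b = 4)" using c(3) ab by blast
    moreover have "\<not> (d a = 4 \<and> d b = 1)"
    proof
      assume h: "d a = 4 \<and> d b = 1"
      then have "a = c" using c(3) ab(3) by blast
      then show False using c(5) h ab(1) eE by blast
    qed
    moreover have "\<not> (d a = 1 \<and> d b = 4)"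
    proof
      assume h: "d a = 1 \<and> d b = 4"
      then have "b = c" using c(3) ab(4) by blast
      then have "{c, a} \<in> E" using ab(1) eE by (simp add: insert_commute)
      then show False using c(5) h by blast
    qed
    moreover have "d a = 1 \<or> d a = 2 \<or> d a = 4" "d b = 1 \<or> d b = 2 \<or> d b = 4" using ab dV by auto
    ultimately show ?thesis using ab(1,2,5) by blast
  qed
  define P where "P i j e = (\<exists>u v. e = {u, v} \<and> u \<noteq> v \<and>
      ((d u = i \<and> d v = j) \<or> (d u = j \<and> d v = i)))" for i j e
  have mE: "m_edges E i j = card {e\<in>E. P i j e}" for i j
    unfolding m_edges_def P_def d_def by simp
  have ecount: "(\<Sum>e\<in>E. \<Sum>v\<in>e. I k v) = k * card {v\<in>V. d v = k}" for k
  proof -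
    have "(\<Sum>e\<in>E. \<Sum>v\<in>e. I k v) = (\<Sum>v\<in>V. \<Sum>e\<in>{e\<in>E. v \<in> e}. I k v)" by (rule swap)
    also have "\<dots> = (\<Sum>v\<in>V. I k v * d v)" unfolding d_def degree_def by (simp add: mult.commute)
    also have "\<dots> = (\<Sum>v\<in>V. k * I k v)" by (rule sum.cong) (auto simp: I_def)
    also have "\<dots> = k * card {v\<in>V. d v = k}" by (simp add: sum_distrib_left[symmetric] cntI)
    finally show ?thesis .
  qed
  define B where "B Q = (if Q then (1::nat) else 0)" for Q
  have perE: "(\<Sum>v\<in>e. I 1 v) = B (P 1 2 e) \<and> (\<Sum>v\<in>e. I 4 v) = B (P 2 4 e) \<and>
      (\<Sum>v\<in>e. I 2 v) = B (P 1 2 e) + 2 * B (P 2 2 e) + B (P 2 4 e) \<and> \<not> P 1 4 e" if eE: "e \<in> E" for e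
  proof -
    obtain a b where ab: "e = {a, b}" "a \<noteq> b"
      "(d a = 1 \<and> d b = 2) \<or> (d a = 2 \<and> d b = 1) \<or> (d a = 2 \<and> d b = 2) \<or> (d a = 2 \<and> d b = 4) \<or> (d a = 4 \<and> d b = 2)"
      using edge_cls[OF eE] by blast
    have Pab: "P i j e \<longleftrightarrow> ((d a = i \<and> d b = j) \<or> (d a = j \<and> d b = i)) \<or> ((d b = i \<and> d a = j) \<or> (d b = j \<and> d a = i))" for i j
      unfolding P_def ab(1) by (rule pair_pred[OF ab(2)])
    have sI: "(\<Sum>v\<in>e. I k v) = I k a + I k b" for k using ab by simp
    show ?thesis using ab(3) unfolding sI Pab by (auto simp: I_def B_def)
  qed
  have Bsum: "(\<Sum>e\<in>E. B (Q e)) = card {e\<in>E. Q e}" for Q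
    unfolding B_def using cnt_nat[OF finE] by simp
  have m12: "m_edges E 1 2 = 4"
  proof -
    have "(\<Sum>e\<in>E. \<Sum>v\<in>e. I 1 v) = (\<Sum>e\<in>E. B (P 1 2 e))" by (rule sum.cong) (use perE in auto)
    then show ?thesis using ecount[of 1] Bsum mE n1v unfolding n1_def by simp
  qed
  have m24: "m_edges E 2 4 = 4"
  proof -
    have "(\<Sum>e\<in>E. \<Sum>v\<in>e. I 4 v) = (\<Sum>e\<in>E. B (P 2 4 e))" by (rule sum.cong) (use perE in auto)
    then show ?thesis using ecount[of 4] Bsum mE V4 by simp
  qed
  have m14: "m_edges E 1 4 = 0"
  proof -
    have em: "{e\<in>E. P 1 4 e} = {}" using perE by auto
    show ?thesis unfolding mE em by simp
  qed
  have m22: "m_edges E 2 2 = n - 9"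
  proof -
    have "(\<Sum>e\<in>E. \<Sum>v\<in>e. I 2 v) = (\<Sum>e\<in>E. B (P 1 2 e) + 2 * B (P 2 2 e) + B (P 2 4 e))"
      by (rule sum.cong) (use perE in auto)
    also have "\<dots> = m_edges E 1 2 + 2 * m_edges E 2 2 + m_edges E 2 4"
      by (simp add: sum.distrib sum_distrib_left[symmetric] Bsum mE)
    finally have "2 * n2 = 4 + 2 * m_edges E 2 2 + 4" using ecount[of 2] m12 m24 unfolding n2_def by simp
    then show ?thesis using n2v by simp
  qed
  have V3c: "card {v\<in>V. degree E v = 3} = 0" using V3 unfolding d_def by (metis card.empty)
  show ?thesis unfolding Phi_def num_deg_def
    using chem m12 m24 m14 m22 V4 V3c n1v n2v unfolding n_def n1_def n2_def d_def by simp
qed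

end



lemma my_rtranclp_sym:
  assumes sym: "\<And>a b. r a b \<Longrightarrow> r b a" and "r\<^sup>*\<^sup>* x y"
  shows "r\<^sup>*\<^sup>* y x"
  using assms(2)
proof (induction rule: rtranclp_induct)
  case base then show ?case by simp
next
  case (step y z)
  then show ?case using sym by (meson converse_rtranclp_into_rtranclp)
qed

lemma ptree:
  fixes x :: "nat \<Rightarrow> 'a" and p :: "nat \<Rightarrow> nat" and n :: nat
  assumes inj: "inj_on x {..<n}" and pl: "\<And>j. 1 \<le> j \<Longrightarrow> j < n \<Longrightarrow> p j < j" and n1: "n \<ge> 2"
  shows "is_tree (x ` {..<n}) ((\<lambda>j. {x (p j), x j}) ` {1..<n})"
    and "card (x ` {..<n}) = n"
    and "\<And>k. k < n \<Longrightarrow> degree ((\<lambda>j. {x (p j), x j}) ` {1..<n}) (x k)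
            = card {j\<in>{1..<n}. p j = k} + (if k \<ge> 1 then 1 else 0)"
proof -
  define V' where "V' = x ` {..<n}"
  define f where "f j = {x (p j), x j}" for j
  define E' where "E' = f ` {1..<n}"
  have xeq: "x a = x b \<longleftrightarrow> a = b" if "a < n" "b < n" for a b
    using inj that by (meson inj_on_eq_iff lessThan_iff)
  have pn: "p j < n" if "1 \<le> j" "j < n" for j using pl[OF that] that by simp
  have cV: "card V' = n" unfolding V'_def using inj by (simp add: card_image)
  have injf: "inj_on f {1..<n}"
  proof (rule inj_onI)
    fix a b assume a: "a \<in> {1..<n}" and b: "b \<in> {1..<n}" and fab: "f a = f b"
    have pa: "p a < a" "p a < n" and pb: "p b < b" "p b < n" using pl pn a b by auto
    from fab have "(x (p a) = x (p b) \<and> x a = x b) \<or> (x (p a) = x b \<and> x a = x (p b))"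
      unfolding f_def by (auto simp: doubleton_eq_iff)
    then have "(p a = p b \<and> a = b) \<or> (p a = b \<and> a = p b)"
      using xeq pa pb a b by auto
    then show "a = b" using pa pb by auto
  qed
  have cE: "card E' = n - 1" unfolding E'_def using injf by (simp add: card_image)
  have sg: "simple_graph V' E'"
    unfolding simple_graph_def
  proof
    show "finite V'" unfolding V'_def by simp
    show "\<forall>e\<in>E'. \<exists>u v. e = {u, v} \<and> u \<noteq> v \<and> u \<in> V' \<and> v \<in> V'"
    proof
      fix e assume "e \<in> E'"
      then obtain j where j: "j \<in> {1..<n}" "e = f j" unfolding E'_def by blast
      have "p j < j" "p j < n" using pl pn j by auto
      then have "x (p j) \<noteq> x j" using xeq j by auto
      moreover have "x (p j) \<in> V'" "x j \<in> V'" unfolding V'_def using \<open>p j < n\<close> j by auto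
      ultimately show "\<exists>u v. e = {u, v} \<and> u \<noteq> v \<and> u \<in> V' \<and> v \<in> V'" using j unfolding f_def by blast
    qed
  qed
  have adjsym: "adj E' a b \<Longrightarrow> adj E' b a" for a b unfolding adj_def by (simp add: insert_commute)
  have reach: "(adj E')\<^sup>*\<^sup>* (x 0) (x j)" if "j < n" for j
    using that
  proof (induction j rule: less_induct)
    case (less j)
    show ?case
    proof (cases "j = 0")
      case True then show ?thesis by simp
    next
      case False
      then have j1: "1 \<le> j" by simp
      have "(adj E')\<^sup>*\<^sup>* (x 0) (x (p j))" using less.IH pl[OF j1 less.prems] less.prems by simp
      moreover have "adj E' (x (p j)) (x j)" unfolding adj_def E'_def f_def using j1 less.prems by auto
      ultimately show ?thesis by simp
    qed
  qed
  have conn: "connected_graph V' E'"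
    unfolding connected_graph_def
  proof
    have "x 0 \<in> V'" unfolding V'_def using n1 by simp
    then show "V' \<noteq> {}" by blast
    show "\<forall>u\<in>V'. \<forall>v\<in>V'. (adj E')\<^sup>*\<^sup>* u v"
    proof (intro ballI)
      fix u v assume "u \<in> V'" "v \<in> V'"
      then obtain a b where ab: "a < n" "b < n" "u = x a" "v = x b" unfolding V'_def by auto
      have "(adj E')\<^sup>*\<^sup>* (x a) (x 0)" using my_rtranclp_sym[OF adjsym reach[OF ab(1)]] by blast
      then show "(adj E')\<^sup>*\<^sup>* u v" using reach[OF ab(2)] ab by simp
    qed
  qed
  show "is_tree (x ` {..<n}) ((\<lambda>j. {x (p j), x j}) ` {1..<n})"
    using sg conn cE cV unfolding is_tree_def V'_def E'_def f_def by simp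
  show "card (x ` {..<n}) = n" using cV unfolding V'_def .
  fix k assume k: "k < n"
  have inc: "{e\<in>E'. x k \<in> e} = f ` {j\<in>{1..<n}. p j = k \<or> j = k}"
  proof -
    have "x k \<in> f j \<longleftrightarrow> p j = k \<or> j = k" if "j \<in> {1..<n}" for j
      using xeq[OF k] pn that unfolding f_def by auto
    then show ?thesis unfolding E'_def by auto
  qed
  have c1: "card {e\<in>E'. x k \<in> e} = card {j\<in>{1..<n}. p j = k \<or> j = k}"
    unfolding inc by (rule card_image) (rule inj_on_subset[OF injf], auto)
  have c2: "card {j\<in>{1..<n}. p j = k \<or> j = k} = card {j\<in>{1..<n}. p j = k} + (if k \<ge> 1 then 1 else 0)"
  proof (cases "k \<ge> 1")
    case True
    have "{j\<in>{1..<n}. p j = k \<or> j = k} = insert k {j\<in>{1..<n}. p j = k}" using True k by auto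
    moreover have "k \<notin> {j\<in>{1..<n}. p j = k}" using pl True k by fastforce
    ultimately show ?thesis using True by simp
  next
    case False
    then have "{j\<in>{1..<n}. p j = k \<or> j = k} = {j\<in>{1..<n}. p j = k}" by auto
    then show ?thesis using False by simp
  qed
  show "degree ((\<lambda>j. {x (p j), x j}) ` {1..<n}) (x k) = card {j\<in>{1..<n}. p j = k} + (if k \<ge> 1 then 1 else 0)"
    using c1 c2 unfolding degree_def E'_def f_def by simp
qed



lemma sqrt_bnd:
  assumes "0 \<le> a" "a*a \<le> x" "x \<le> b*b" "0 \<le> b"
  shows "a \<le> sqrt x \<and> sqrt x \<le> b"
proof
  show "a \<le> sqrt x" using assms by (simp add: real_le_rsqrt power2_eq_square)
  have "sqrt x \<le> sqrt (b*b)" using assms(3) by (rule real_sqrt_le_mono)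
  also have "sqrt (b*b) = b" using assms(4) by (simp add: real_sqrt_mult_self)
  finally show "sqrt x \<le> b" .
qed

lemma s2: "1.4142 \<le> sqrt 2 \<and> sqrt 2 \<le> (1.4143::real)" by (rule sqrt_bnd) auto
lemma s5: "2.236 \<le> sqrt 5 \<and> sqrt 5 \<le> (2.2361::real)" by (rule sqrt_bnd) auto
lemma s8: "2.8284 \<le> sqrt 8 \<and> sqrt 8 \<le> (2.8285::real)" by (rule sqrt_bnd) auto
lemma s10: "3.1622 \<le> sqrt 10 \<and> sqrt 10 \<le> (3.1623::real)" by (rule sqrt_bnd) auto
lemma s13: "3.6055 \<le> sqrt 13 \<and> sqrt 13 \<le> (3.6056::real)" by (rule sqrt_bnd) auto
lemma s17: "4.1231 \<le> sqrt 17 \<and> sqrt 17 \<le> (4.1232::real)" by (rule sqrt_bnd) auto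
lemma s18: "4.2426 \<le> sqrt 18 \<and> sqrt 18 \<le> (4.2427::real)" by (rule sqrt_bnd) auto
lemma s20: "4.4721 \<le> sqrt 20 \<and> sqrt 20 \<le> (4.4722::real)" by (rule sqrt_bnd) auto
lemma s32: "5.6568 \<le> sqrt 32 \<and> sqrt 32 \<le> (5.6569::real)" by (rule sqrt_bnd) auto
lemma s4: "sqrt 4 = (2::real)" by (rule real_sqrt_unique) auto
lemma s9: "sqrt 9 = (3::real)" by (rule real_sqrt_unique) auto
lemma s25: "sqrt 25 = (5::real)" by (rule real_sqrt_unique) auto

definition hS :: "nat \<Rightarrow> real" where
  "hS k = (if k = 1 then sqrt 5 - sqrt 8 / 2 else if k = 2 then sqrt 8 / 2 else if k = 3 then 9/5
     else sqrt 20 - sqrt 8 / 2)"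
definition hR :: "nat \<Rightarrow> real" where
  "hR k = (if k = 1 then 1 - sqrt 2 / 2 else if k = 2 then sqrt 2 / 2 else if k = 3 then 1
     else sqrt 10 - sqrt 2 / 2)"

lemma cases4: "i \<in> {1..4} \<Longrightarrow> i = 1 \<or> i = 2 \<or> i = 3 \<or> i = (4::nat)" by auto

lemma EI_S:
  assumes "i \<in> {1..4}" "j \<in> {1..4}" "\<not>(i=1 \<and> j=1)" "\<not>(i=4 \<and> j=4)"
  shows "sqrt ((real i)\<^sup>2 + (real j)\<^sup>2) \<ge> hS i + hS j"
  using cases4[OF assms(1)] cases4[OF assms(2)] assms(3,4) s2 s5 s8 s10 s13 s17 s18 s20 s32 s4 s9 s25
  by (auto simp: hS_def)

lemma EI_R:
  assumes "i \<in> {1..4}" "j \<in> {1..4}" "\<not>(i=1 \<and> j=1)" "\<not>(i=4 \<and> j=4)"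
  shows "sqrt ((real i - 1)\<^sup>2 + (real j - 1)\<^sup>2) \<ge> hR i + hR j"
  using cases4[OF assms(1)] cases4[OF assms(2)] assms(3,4) s2 s5 s8 s10 s13 s17 s18 s20 s32 s4 s9 s25
  by (auto simp: hR_def)

lemma NS:
  "3*hS 3 > (2*hS 1 - 2*hS 2) + 3*(2*hS 2 - hS 1)"
  "8*(sqrt 32 / 2) - (2*hS 1 - 2*hS 2) - 4*(2*hS 2 - hS 1) > 4*hS 4"
  "4*(sqrt 32 / 2) > (2*hS 1 - 2*hS 2) + 4*(2*hS 2 - hS 1)"
  "sqrt 32 / 2 \<le> hS 4"
  "sqrt ((real 4)\<^sup>2 + (real 4)\<^sup>2) = 2 * (sqrt 32 / 2)"
  "sqrt ((real 1)\<^sup>2 + (real 2)\<^sup>2) = hS 1 + hS 2"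
  "sqrt ((real 2)\<^sup>2 + (real 2)\<^sup>2) = 2 * hS 2"
  "sqrt ((real 2)\<^sup>2 + (real 4)\<^sup>2) = hS 2 + hS 4"
  "sqrt ((real 1)\<^sup>2 + (real 4)\<^sup>2) > hS 1 + hS 4"
  using s2 s5 s8 s10 s13 s17 s18 s20 s32 by (auto simp: hS_def)

lemma NR:
  "3*hR 3 > (2*hR 1 - 2*hR 2) + 3*(2*hR 2 - hR 1)"
  "8*(sqrt 18 / 2) - (2*hR 1 - 2*hR 2) - 4*(2*hR 2 - hR 1) > 4*hR 4"
  "4*(sqrt 18 / 2) > (2*hR 1 - 2*hR 2) + 4*(2*hR 2 - hR 1)"
  "sqrt 18 / 2 \<le> hR 4"
  "sqrt ((real 4 - 1)\<^sup>2 + (real 4 - 1)\<^sup>2) = 2 * (sqrt 18 / 2)"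
  "sqrt ((real 1 - 1)\<^sup>2 + (real 2 - 1)\<^sup>2) = hR 1 + hR 2"
  "sqrt ((real 2 - 1)\<^sup>2 + (real 2 - 1)\<^sup>2) = 2 * hR 2"
  "sqrt ((real 2 - 1)\<^sup>2 + (real 4 - 1)\<^sup>2) = hR 2 + hR 4"
  "sqrt ((real 1 - 1)\<^sup>2 + (real 4 - 1)\<^sup>2) > hR 1 + hR 4"
  using s2 s5 s8 s10 s13 s17 s18 s20 s32 s9 by (auto simp: hR_def)


definition sp :: "nat \<Rightarrow> nat \<Rightarrow> nat" where
  "sp m j = (if j \<le> m + 2 then j - 1 else if j = m + 4 then m + 3 else if j = m + 6 then m + 5
     else if j = m + 8 then m + 7 else 0)"

lemma jcl: "(j::nat) < m + 9 \<Longrightarrow> j \<le> m+2 \<or> j = m+3 \<or> j = m+4 \<or> j = m+5 \<or> j = m+6 \<or> j = m+7 \<or> j = m+8"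
  by linarith

lemma sp_a: "j \<le> m + 2 \<Longrightarrow> sp m j = j - 1" unfolding sp_def by simp
lemma sp_3: "sp m (m+3) = 0" unfolding sp_def by simp
lemma sp_4: "sp m (m+4) = m+3" unfolding sp_def by simp
lemma sp_5: "sp m (m+5) = 0" unfolding sp_def by simp
lemma sp_6: "sp m (m+6) = m+5" unfolding sp_def by simp
lemma sp_7: "sp m (m+7) = 0" unfolding sp_def by simp
lemma sp_8: "sp m (m+8) = m+7" unfolding sp_def by simp

lemma sp_cases:
  assumes "j < m + 9" "1 \<le> j"
  shows "(j \<le> m+2 \<and> sp m j = j - 1) \<or> (j = m+3 \<and> sp m j = 0) \<or> (j = m+4 \<and> sp m j = m+3) \<or>
    (j = m+5 \<and> sp m j = 0) \<or> (j = m+6 \<and> sp m j = m+5) \<or> (j = m+7 \<and> sp m j = 0) \<or> (j = m+8 \<and> sp m j = m+7)"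
  using jcl[OF assms(1)] sp_a[of j m] sp_3 sp_4 sp_5 sp_6 sp_7 sp_8 by auto

lemma sp_lt: assumes "j < m + 9" "1 \<le> j" shows "sp m j < j"
  using sp_cases[OF assms] assms(2) by auto

lemma sp_ch0: "{j\<in>{1..<m+9}. sp m j = 0} = {1, m+3, m+5, m+7}"
proof
  show "{j\<in>{1..<m+9}. sp m j = 0} \<subseteq> {1, m+3, m+5, m+7}"
  proof
    fix j assume j: "j \<in> {j\<in>{1..<m+9}. sp m j = 0}"
    then have j1: "1 \<le> j" "j < m+9" "sp m j = 0" by auto
    show "j \<in> {1, m+3, m+5, m+7}"
      using sp_cases[OF j1(2,1)] j1(1,3) by auto
  qed
  show "{1, m+3, m+5, m+7} \<subseteq> {j\<in>{1..<m+9}. sp m j = 0}"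
    using sp_a[of 1 m] sp_3 sp_5 sp_7 by auto
qed

lemma sp_card0: "card {j\<in>{1..<m+9}. sp m j = 0} = 4"
  unfolding sp_ch0 by (simp add: card_insert_if)

lemma sp_chk: assumes "1 \<le> k" shows "{j\<in>{1..<m+9}. sp m j = k} \<subseteq> {k+1}"
proof
  fix j assume j: "j \<in> {j\<in>{1..<m+9}. sp m j = k}"
  then have j1: "1 \<le> j" "j < m+9" "sp m j = k" by auto
  show "j \<in> {k+1}"
    using sp_cases[OF j1(2,1)] j1(3) assms by auto
qed

lemma sp_has: assumes "k \<in> {1, m+3, m+5, m+7}" shows "\<exists>j. 1 \<le> j \<and> j < m+9 \<and> sp m j = k"
proof -
  have "sp m 2 = 1" using sp_a[of 2 m] by simp
  then show ?thesis using assms sp_4 sp_6 sp_8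
    by (auto intro: exI[of _ 2] exI[of _ "m+4"] exI[of _ "m+6"] exI[of _ "m+8"])
qed

theorem theorem3p1:
  fixes n :: nat and V :: "'a set" and E :: "'a set set"
  assumes "n \<ge> 9"
    and "chemical_tree V E" and "card V = n"
    and "max_degree V E = 4"
    and "\<not> Phi n V E"
  shows "\<exists>(V' :: 'a set) (E' :: 'a set set). Phi n V' E' \<and> SO E' < SO E \<and> SO_red E' < SO_red E"
proof -
  have n9: "n \<ge> 9" and chem: "chemical_tree V E" and cV: "card V = n" and md: "max_degree V E = 4"
    and nP: "\<not> Phi n V E" using assms by auto
  interpret T: ctree V E by unfold_locales (use chem cV n9 in auto)
  have has4: "\<exists>c\<in>V. degree E c = 4"
  proof -
    have "V \<noteq> {}" using cV n9 by auto
    then have "Max (degree E ` V) \<in> degree E ` V" using T.finV by (intro Max_in) auto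
    then show ?thesis using md unfolding max_degree_def by auto
  qed
  have nB: "\<not> B3 V E" using T.B3_Phi nP cV by auto
  have soE: "SO E > LBv hS n"
  proof -
    have "(B3 V E \<longrightarrow> idx (\<lambda>k. (real k)\<^sup>2) E = LBv hS (card V)) \<and> (\<not> B3 V E \<longrightarrow> idx (\<lambda>k. (real k)\<^sup>2) E > LBv hS (card V))"
      by (rule T.index_bound[OF has4 NS(1) NS(2) NS(3) NS(4) EI_S NS(5) NS(6) NS(7) NS(8) NS(9)])
    then show ?thesis using nB cV by (simp add: SO_def idx_def)
  qed
  have srE: "SO_red E > LBv hR n"
  proof -
    have "(B3 V E \<longrightarrow> idx (\<lambda>k. (real k - 1)\<^sup>2) E = LBv hR (card V)) \<and> (\<not> B3 V E \<longrightarrow> idx (\<lambda>k. (real k - 1)\<^sup>2) E > LBv hR (card V))"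
      by (rule T.index_bound[OF has4 NR(1) NR(2) NR(3) NR(4) EI_R NR(5) NR(6) NR(7) NR(8) NR(9)])
    then show ?thesis using nB cV by (simp add: SO_red_def idx_def)
  qed
  \<comment> \<open>the spider\<close>
  obtain m where m: "n = m + 9" using n9 by (metis add.commute le_Suc_ex)
  obtain x where bx: "bij_betw x {0..<card V} V" using ex_bij_betw_nat_finite[OF T.finV] by blast
  have injx: "inj_on x {..<n}" and imx: "x ` {..<n} = V"
    using bx cV unfolding bij_betw_def by (auto simp: atLeast0LessThan)
  define E' where "E' = (\<lambda>j. {x (sp m j), x j}) ` {1..<n}"
  have pl: "\<And>j. 1 \<le> j \<Longrightarrow> j < n \<Longrightarrow> sp m j < j" using sp_lt m by auto
  have n2: "n \<ge> 2" using n9 by simp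
  have PT1: "is_tree (x ` {..<n}) E'"
    unfolding E'_def by (rule ptree(1)[OF injx _ n2]) (rule pl)
  have tree': "is_tree V E'" using PT1 imx by simp
  have degx: "degree E' (x k) = card {j\<in>{1..<n}. sp m j = k} + (if k \<ge> 1 then 1 else 0)" if "k < n" for k
    unfolding E'_def by (rule ptree(3)[OF injx _ n2 that]) (rule pl)
  have deg0: "degree E' (x 0) = 4" using degx[of 0] sp_card0[of m] m by simp
  have degk: "degree E' (x k) \<le> 2" if "k < n" "1 \<le> k" for k
  proof -
    have "card {j\<in>{1..<n}. sp m j = k} \<le> card {k+1}"
      using sp_chk[OF that(2), of m] m by (intro card_mono) auto
    then show ?thesis using degx[OF that(1)] that(2) by simp
  qed
  have chem': "chemical_tree V E'"
    unfolding chemical_tree_def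
  proof
    show "is_tree V E'" by (rule tree')
    show "\<forall>v\<in>V. degree E' v \<le> 4"
    proof
      fix v assume "v \<in> V"
      then obtain k where k: "k < n" "v = x k" using imx by auto
      show "degree E' v \<le> 4"
      proof (cases "k = 0")
        case True then show ?thesis using deg0 k by simp
      next
        case False then show ?thesis using degk[OF k(1)] k by simp
      qed
    qed
  qed
  interpret T2: ctree V E' by unfold_locales (use chem' cV n9 in auto)
  have x0V: "x 0 \<in> V" using imx n9 by auto
  have B3': "B3 V E'"
    unfolding B3_def
  proof (rule bexI[OF _ x0V], intro conjI)
    show "degree E' (x 0) = 4" by (rule deg0)
    show "\<forall>v\<in>V. degree E' v = 4 \<longrightarrow> v = x 0"
    proof (intro ballI impI)
      fix v assume v: "v \<in> V" "degree E' v = 4"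
      then obtain k where k: "k < n" "v = x k" using imx by auto
      show "v = x 0"
      proof (cases "k = 0")
        case True then show ?thesis using k by simp
      next
        case False then show ?thesis using degk[OF k(1)] k v by simp
      qed
    qed
    show "\<forall>v\<in>V. degree E' v \<noteq> 3"
    proof
      fix v assume v: "v \<in> V"
      then obtain k where k: "k < n" "v = x k" using imx by auto
      show "degree E' v \<noteq> 3"
      proof (cases "k = 0")
        case True then show ?thesis using deg0 k by simp
      next
        case False then show ?thesis using degk[OF k(1)] k by simp
      qed
    qed
    show "\<forall>w. {x 0, w} \<in> E' \<longrightarrow> degree E' w \<noteq> 1"
    proof (intro allI impI)
      fix w assume w: "{x 0, w} \<in> E'"
      then obtain j where j: "j \<in> {1..<n}" "{x 0, w} = {x (sp m j), x j}" unfolding E'_def by blast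
      have spj1: "sp m j < j" using pl[of j] j(1) by auto
      have spj: "sp m j < j" "sp m j < n" using spj1 j(1) by auto
      have xeq: "x a = x b \<longleftrightarrow> a = b" if "a < n" "b < n" for a b
        using injx that by (meson inj_on_eq_iff lessThan_iff)
      have "(x 0 = x (sp m j) \<and> w = x j) \<or> (x 0 = x j \<and> w = x (sp m j))"
        using j(2) by (auto simp: doubleton_eq_iff)
      moreover have "x 0 \<noteq> x j" using xeq[of 0 j] j(1) n9 by auto
      ultimately have wj: "w = x j" and s0: "sp m j = 0" using xeq[of 0 "sp m j"] spj n9 by auto
      have "j \<in> {1, m+3, m+5, m+7}" using sp_ch0[of m] s0 j(1) m by auto
      then obtain j' where j': "1 \<le> j'" "j' < m + 9" "sp m j' = j" using sp_has by blast
      have "j' \<in> {i\<in>{1..<n}. sp m i = j}" using j' m by auto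
      moreover have "finite {i\<in>{1..<n}. sp m i = j}" by simp
      ultimately have "card {i\<in>{1..<n}. sp m i = j} \<noteq> 0" by (auto simp: card_eq_0_iff)
      then show "degree E' w \<noteq> 1" using degx[of j] j(1) wj by auto
    qed
  qed
  have Phi': "Phi n V E'" using T2.B3_Phi[OF B3'] cV by simp
  have has4': "\<exists>c\<in>V. degree E' c = 4" using deg0 x0V by blast
  have soE': "SO E' = LBv hS n"
  proof -
    have "(B3 V E' \<longrightarrow> idx (\<lambda>k. (real k)\<^sup>2) E' = LBv hS (card V)) \<and> (\<not> B3 V E' \<longrightarrow> idx (\<lambda>k. (real k)\<^sup>2) E' > LBv hS (card V))"
      by (rule T2.index_bound[OF has4' NS(1) NS(2) NS(3) NS(4) EI_S NS(5) NS(6) NS(7) NS(8) NS(9)])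
    then show ?thesis using B3' cV by (simp add: SO_def idx_def)
  qed
  have srE': "SO_red E' = LBv hR n"
  proof -
    have "(B3 V E' \<longrightarrow> idx (\<lambda>k. (real k - 1)\<^sup>2) E' = LBv hR (card V)) \<and> (\<not> B3 V E' \<longrightarrow> idx (\<lambda>k. (real k - 1)\<^sup>2) E' > LBv hR (card V))"
      by (rule T2.index_bound[OF has4' NR(1) NR(2) NR(3) NR(4) EI_R NR(5) NR(6) NR(7) NR(8) NR(9)])
    then show ?thesis using B3' cV by (simp add: SO_red_def idx_def)
  qed
  have "Phi n V E' \<and> SO E' < SO E \<and> SO_red E' < SO_red E" using Phi' soE' srE' soE srE by simp
  then show ?thesis by blast
qed

end
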